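(* Let $M=I\times F_1\times F_2\times F_3$ with metric $g=-dt^2\oplus\phi^{2p_1}g_{F_1}\oplus\phi^{2p_2}g_{F_2}\oplus\phi^{2p_3}g_{F_3}$, where $I\subset\mathbb{R}$ is an open interval, $\phi:I\to(0,\infty)$ is smooth, $p_1,p_2,p_3\in\mathbb{R}$ with $p_i\neq p_j$ for some $i,j\in\{1,2,3\}$, and each $(F_i,g_{F_i})$ is a one-dimensional Riemannian manifold; let $\zeta=p_1+p_2+p_3$, $\eta=p_1^2+p_2^2+p_3^2$, and let $\overline\nabla$ be the semi-symmetric metric connection determined by $P=\frac{\partial}{\partial t}$. Then $(M,\overline\nabla)$ is Einstein with Einstein constant $\lambda$ if and only if $\lambda=0$, $\frac{2\eta}{\zeta^2}=1$, and $\phi=c_0e^{\frac{2t}{\zeta}}$ for a constant $c_0$.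
   Context: $\nabla$ is the Levi-Civita connection of $g$, $\pi(X)=g(X,P)$, and $\overline\nabla_XY=\nabla_XY+\pi(Y)X-g(X,Y)P$. Conventions: $\overline R(X,Y)Z=\overline\nabla_X\overline\nabla_YZ-\overline\nabla_Y\overline\nabla_XZ-\overline\nabla_{[X,Y]}Z$, $\overline{\mathrm{Ric}}(X,Y)=\sum_k\varepsilon_kg(\overline R(X,E_k)Y,E_k)$ for a local orthonormal frame $(E_k)$, $\varepsilon_k=g(E_k,E_k)$; Einstein with constant $\lambda$ means $\overline{\mathrm{Ric}}=\lambda g$. *)

theory Defs
  imports "HOL-Analysis.Analysis"
begin

text \<open>Local coordinate framework on an open subset of R^4.  Points are vectors
  x :: real^4, coordinate 0 is the time coordinate t, coordinates 1,2,3 are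
  (arc-length) coordinates on the one-dimensional fibres F_1, F_2, F_3.\<close>

type_synonym pt = "real^4"
type_synonym vfield = "pt \<Rightarrow> real^4"
type_synonym metric = "pt \<Rightarrow> real^4^4"

definition smooth_on_real :: "(real \<Rightarrow> real) \<Rightarrow> real set \<Rightarrow> bool" where
  "smooth_on_real f S \<longleftrightarrow> (\<forall>n. \<forall>t\<in>S. ((deriv ^^ n) f) differentiable (at t))"

definition pd :: "4 \<Rightarrow> (pt \<Rightarrow> real) \<Rightarrow> pt \<Rightarrow> real" where
  "pd k f x = deriv (\<lambda>s. f (x + s *\<^sub>R axis k 1)) 0"

definition gm :: "metric \<Rightarrow> pt \<Rightarrow> real^4 \<Rightarrow> real^4 \<Rightarrow> real" where
  "gm G x u v = (\<Sum>i\<in>UNIV. \<Sum>j\<in>UNIV. u $ i * G x $ i $ j * v $ j)"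

definition chr :: "metric \<Rightarrow> 4 \<Rightarrow> 4 \<Rightarrow> 4 \<Rightarrow> pt \<Rightarrow> real" where
  "chr G k i j x = (1/2) * (\<Sum>l\<in>UNIV. matrix_inv (G x) $ k $ l *
      (pd i (\<lambda>y. G y $ j $ l) x + pd j (\<lambda>y. G y $ i $ l) x - pd l (\<lambda>y. G y $ i $ j) x))"

definition LC :: "metric \<Rightarrow> vfield \<Rightarrow> vfield \<Rightarrow> vfield" where
  "LC G X Y x = (\<chi> k. \<Sum>i\<in>UNIV. X x $ i *
      (pd i (\<lambda>y. Y y $ k) x + (\<Sum>j\<in>UNIV. chr G k i j x * Y x $ j)))"

definition ssm :: "metric \<Rightarrow> vfield \<Rightarrow> vfield \<Rightarrow> vfield \<Rightarrow> vfield" where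
  "ssm G P X Y x = LC G X Y x + gm G x (Y x) (P x) *\<^sub>R X x - gm G x (X x) (Y x) *\<^sub>R P x"

definition lie_bracket :: "vfield \<Rightarrow> vfield \<Rightarrow> vfield" where
  "lie_bracket X Y x = (\<chi> k. \<Sum>i\<in>UNIV. X x $ i * pd i (\<lambda>y. Y y $ k) x - Y x $ i * pd i (\<lambda>y. X y $ k) x)"

definition curv :: "(vfield \<Rightarrow> vfield \<Rightarrow> vfield) \<Rightarrow> vfield \<Rightarrow> vfield \<Rightarrow> vfield \<Rightarrow> vfield" where
  "curv D X Y Z = (\<lambda>x. D X (D Y Z) x - D Y (D X Z) x - D (lie_bracket X Y) Z x)"

definition cfield :: "4 \<Rightarrow> vfield" where
  "cfield a = (\<lambda>x. axis a 1)"

text \<open>Ricci tensor Ric(X,Y) = sum_k eps_k g(R(X,E_k)Y,E_k), written via the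
  (frame independent) trace with the inverse metric over the coordinate frame:
  Ric(X,Y) = sum_{c,d} g^{cd} g(R(X,d_c)Y, d_d).\<close>
definition ric :: "metric \<Rightarrow> (vfield \<Rightarrow> vfield \<Rightarrow> vfield) \<Rightarrow> vfield \<Rightarrow> vfield \<Rightarrow> pt \<Rightarrow> real" where
  "ric G D X Y x = (\<Sum>c\<in>UNIV. \<Sum>d\<in>UNIV. matrix_inv (G x) $ c $ d *
      gm G x (curv D X (cfield c) Y x) (cfield d x))"

definition einstein :: "metric \<Rightarrow> (vfield \<Rightarrow> vfield \<Rightarrow> vfield) \<Rightarrow> pt set \<Rightarrow> real \<Rightarrow> bool" where
  "einstein G D U lam \<longleftrightarrow>
     (\<forall>x\<in>U. \<forall>a b. ric G D (cfield a) (cfield b) x = lam * G x $ a $ b)"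

definition warp_metric :: "(real \<Rightarrow> real) \<Rightarrow> real \<Rightarrow> real \<Rightarrow> real \<Rightarrow> metric" where
  "warp_metric \<phi> p1 p2 p3 x = (\<chi> i j. if i \<noteq> j then 0
       else if i = 0 then -1
       else if i = 1 then \<phi> (x $ 0) powr (2 * p1)
       else if i = 2 then \<phi> (x $ 0) powr (2 * p2)
       else \<phi> (x $ 0) powr (2 * p3))"

end

theory Submission
  imports Defs
begin


lemma deriv_shift0: "deriv (\<lambda>s. f (a + s)) 0 = deriv f (a::real)"
  unfolding deriv_def using DERIV_shift[of f _ 0 a] by (simp add: add.commute)

lemma pd_t: "pd i (\<lambda>y. F (y $ 0)) x = (if i = 0 then deriv F (x $ 0) else 0)"
proof (cases "i = 0")
  case True
  have "(\<lambda>s. F ((x + s *\<^sub>R axis i 1) $ 0)) = (\<lambda>s. F (x$0 + s))" using True by (simp add: axis_def)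
  then show ?thesis using True by (simp add: pd_def deriv_shift0)
next
  case False
  have "(\<lambda>s. F ((x + s *\<^sub>R axis i 1) $ 0)) = (\<lambda>s. F (x$0))" using False by (simp add: axis_def)
  then show ?thesis using False by (simp add: pd_def)
qed

definition chrT :: "(real \<Rightarrow> real^4^4) \<Rightarrow> 4 \<Rightarrow> 4 \<Rightarrow> 4 \<Rightarrow> real \<Rightarrow> real" where
  "chrT W k i j t = (1/2) * (\<Sum>l\<in>UNIV. matrix_inv (W t) $ k $ l *
      ((if i = 0 then deriv (\<lambda>t. W t $ j $ l) t else 0) + (if j = 0 then deriv (\<lambda>t. W t $ i $ l) t else 0)
       - (if l = 0 then deriv (\<lambda>t. W t $ i $ j) t else 0)))"

lemma chr_t: "chr (\<lambda>x. W (x$0)) k i j x = chrT W k i j (x$0)"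
  unfolding chr_def chrT_def
  by (simp add: pd_t[where F="\<lambda>t. W t $ a $ b" for a b])

definition gmT :: "(real \<Rightarrow> real^4^4) \<Rightarrow> real \<Rightarrow> real^4 \<Rightarrow> real^4 \<Rightarrow> real" where
  "gmT W t u v = (\<Sum>i\<in>UNIV. \<Sum>j\<in>UNIV. u $ i * W t $ i $ j * v $ j)"

lemma gm_t: "gm (\<lambda>x. W (x$0)) x u v = gmT W (x$0) u v"
  by (simp add: gm_def gmT_def)

definition LCT :: "(real \<Rightarrow> real^4^4) \<Rightarrow> 4 \<Rightarrow> (real \<Rightarrow> real^4) \<Rightarrow> real \<Rightarrow> real^4" where
  "LCT W a F t = (\<chi> k. (if a = 0 then deriv (\<lambda>t. F t $ k) t else 0) + (\<Sum>j\<in>UNIV. chrT W k a j t * F t $ j))"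

lemma sum_axis: "(\<Sum>i\<in>UNIV. axis a (1::real) $ i * T i) = T a"
proof -
  have "(\<lambda>i. axis a (1::real) $ i * T i) = (\<lambda>i. if i = a then T i else 0)" by (auto simp: axis_def)
  then show ?thesis by (simp only:) simp
qed

lemma cfield_app: "cfield a x = axis a 1" by (simp add: cfield_def)

lemma LC_t: "LC (\<lambda>x. W (x$0)) (cfield a) (\<lambda>y. F (y$0)) x = LCT W a F (x$0)"
  unfolding LC_def LCT_def
  by (simp add: cfield_app add: sum_axis pd_t[where F="\<lambda>t. F t $ b" for b] chr_t)

definition DT :: "(real \<Rightarrow> real^4^4) \<Rightarrow> 4 \<Rightarrow> (real \<Rightarrow> real^4) \<Rightarrow> real \<Rightarrow> real^4" where
  "DT W a F t = LCT W a F t + gmT W t (F t) (axis 0 1) *\<^sub>R axis a 1 - gmT W t (axis a 1) (F t) *\<^sub>R axis 0 1"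

lemma ssm_t: "ssm (\<lambda>x. W (x$0)) (cfield 0) (cfield a) (\<lambda>y. F (y$0)) = (\<lambda>y. DT W a F (y$0))"
  by (rule ext) (simp add: ssm_def DT_def LC_t gm_t cfield_app)

lemma ssm_c: "ssm (\<lambda>x. W (x$0)) (cfield 0) (cfield a) (cfield b) = (\<lambda>y. DT W a (\<lambda>_. axis b 1) (y$0))"
  using ssm_t[of W a "\<lambda>_. axis b 1"] by (simp add: cfield_def)

lemma lie_c: "lie_bracket (cfield a) (cfield c) = (\<lambda>x. 0)"
  by (rule ext) (simp add: lie_bracket_def cfield_def pd_def vec_eq_iff)

lemma ssm_0: "ssm G P (\<lambda>x. 0) Z = (\<lambda>x. 0)"
  by (rule ext) (simp add: ssm_def LC_def gm_def vec_eq_iff)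

definition ricT :: "(real \<Rightarrow> real^4^4) \<Rightarrow> 4 \<Rightarrow> 4 \<Rightarrow> real \<Rightarrow> real" where
  "ricT W a b t = (\<Sum>c\<in>UNIV. \<Sum>d\<in>UNIV. matrix_inv (W t) $ c $ d *
      gmT W t (DT W a (DT W c (\<lambda>_. axis b 1)) t - DT W c (DT W a (\<lambda>_. axis b 1)) t) (axis d 1))"

lemma ric_t: "ric (\<lambda>x. W (x$0)) (ssm (\<lambda>x. W (x$0)) (cfield 0)) (cfield a) (cfield b) x = ricT W a b (x$0)"
  unfolding ric_def ricT_def curv_def
  by (simp add: ssm_c ssm_t[where F="DT W c (\<lambda>_. axis b 1)" for c] lie_c ssm_0 gm_t cfield_app)


definition Wd :: "(4 \<Rightarrow> real \<Rightarrow> real) \<Rightarrow> real \<Rightarrow> real^4^4" where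
  "Wd w t = (\<chi> i j. if i = j then w i t else 0)"

lemma matrix_inv_unique':
  fixes A B :: "real^4^4"
  assumes "A ** B = mat 1" "B ** A = mat 1"
  shows "matrix_inv A = B"
  unfolding matrix_inv_def
proof (rule some_equality)
  show "A ** B = mat 1 \<and> B ** A = mat 1" using assms by simp
next
  fix A' :: "real^4^4" assume h: "A ** A' = mat 1 \<and> A' ** A = mat 1"
  have "A' = A' ** (A ** B)" using assms by (simp add: matrix_mul_rid)
  also have "\<dots> = (A' ** A) ** B" by (simp add: matrix_mul_assoc)
  also have "\<dots> = B" using h by (simp add: matrix_mul_lid)
  finally show "A' = B" .
qed

lemma sdelta: "(\<Sum>k\<in>(UNIV::4 set). if a = k then f k else (0::real)) = f a"
  by (simp add: sum.delta)
lemma s2: "(\<Sum>k\<in>UNIV. (if i = k then f k else (0::real)) * (if k = j then g k else 0))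
     = (if i = (j::4) then f i * g i else 0)"
proof -
  have "(\<lambda>k. (if i = k then f k else (0::real)) * (if k = j then g k else 0)) = (\<lambda>k. if i = k then (f k * (if k = j then g k else 0)) else 0)"
    by auto
  then show ?thesis by (simp only: sdelta) simp
qed

lemma inv_Wd:
  assumes "\<forall>i. w i t \<noteq> 0"
  shows "matrix_inv (Wd w t) = Wd (\<lambda>i t. inverse (w i t)) t"
proof (rule matrix_inv_unique')
  show "Wd w t ** Wd (\<lambda>i t. inverse (w i t)) t = mat 1"
    using assms by (simp add: Wd_def matrix_matrix_mult_def mat_def vec_eq_iff s2)
  show "Wd (\<lambda>i t. inverse (w i t)) t ** Wd w t = mat 1"
    using assms by (simp add: Wd_def matrix_matrix_mult_def mat_def vec_eq_iff s2)
qed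


definition Hf :: "(4 \<Rightarrow> real \<Rightarrow> real) \<Rightarrow> 4 \<Rightarrow> real \<Rightarrow> real" where
  "Hf w i t = deriv (w i) t / (2 * w i t)"

definition Gam :: "(4 \<Rightarrow> real \<Rightarrow> real) \<Rightarrow> 4 \<Rightarrow> 4 \<Rightarrow> 4 \<Rightarrow> real \<Rightarrow> real" where
  "Gam w k i j t = (if k = 0 then (if i = j then deriv (w i) t / 2 else 0)
     else if (i = 0 \<and> j = k) \<or> (j = 0 \<and> i = k) then Hf w k t else 0)"

lemma deriv_Wd: "deriv (\<lambda>t. Wd w t $ j $ l) t = (if j = l then deriv (w j) t else 0)"
  by (cases "j = l") (simp_all add: Wd_def)

lemma sdelta2: "(\<Sum>k\<in>(UNIV::4 set). (if a = k then (c::real) else 0) * f k) = c * f a"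
proof -
  have "(\<lambda>k. (if a = k then c else 0) * f k) = (\<lambda>k. if a = k then c * f k else (0::real))" by auto
  then show ?thesis by (simp only: sdelta)
qed

lemma chrT_Wd:
  assumes "\<forall>i. w i t \<noteq> 0" "w 0 = (\<lambda>_. -1)"
  shows "chrT (Wd w) k i j t = Gam w k i j t"
proof -
  have "chrT (Wd w) k i j t = (1/2) * (inverse (w k t) *
      ((if i = 0 then (if j = k then deriv (w j) t else 0) else 0) + (if j = 0 then (if i = k then deriv (w i) t else 0) else 0)
       - (if k = 0 then (if i = j then deriv (w i) t else 0) else 0)))"
    unfolding chrT_def inv_Wd[of w t, OF assms(1)] deriv_Wd
    by (simp add: Wd_def[of "\<lambda>i t. inverse (w i t)"] sdelta2)
  also have "\<dots> = Gam w k i j t"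
    using assms by (auto simp: Gam_def Hf_def field_simps)
  finally show ?thesis .
qed

lemma gmT_Wd: "gmT (Wd w) t u v = (\<Sum>i\<in>UNIV. u $ i * w i t * v $ i)"
proof -
  have "\<And>i. (\<Sum>j\<in>UNIV. u $ i * (if i = j then w i t else 0) * v $ j) = u $ i * w i t * v $ i"
  proof -
    fix i
    have "(\<lambda>j. u $ i * (if i = j then w i t else 0) * v $ j) = (\<lambda>j. if i = j then u $ i * w i t * v $ j else 0)" by auto
    then show "(\<Sum>j\<in>UNIV. u $ i * (if i = j then w i t else 0) * v $ j) = u $ i * w i t * v $ i"
      by (simp only: sdelta)
  qed
  then show ?thesis by (simp add: gmT_def Wd_def)
qed

lemma sum_axis2: "(\<Sum>i\<in>UNIV. axis a (1::real) $ i * X i * Y i) = X a * Y a"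
  using sum_axis[of a "\<lambda>i. X i * Y i"] by (simp add: mult.assoc)

lemma DT_comp:
  assumes "\<forall>i. w i t \<noteq> 0" "w 0 = (\<lambda>_. -1)"
  shows "DT (Wd w) a F t $ k = (if a = 0 then deriv (\<lambda>t. F t $ k) t else 0)
     + (\<Sum>j\<in>UNIV. Gam w k a j t * F t $ j) - F t $ 0 * axis a 1 $ k - w a t * F t $ a * axis 0 1 $ k"
  using assms by (simp add: DT_def LCT_def chrT_Wd gmT_Wd mult.commute[of _ "axis _ _ $ _"] sum_axis sum_axis2)


definition CfT :: "(4 \<Rightarrow> real \<Rightarrow> real) \<Rightarrow> 4 \<Rightarrow> 4 \<Rightarrow> real \<Rightarrow> real^4" where
  "CfT w c b t = (\<chi> k. if c = 0 \<and> b \<noteq> 0 \<and> k = b then Hf w b t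
     else if b = 0 \<and> c \<noteq> 0 \<and> k = c then Hf w c t - 1
     else if c = b \<and> c \<noteq> 0 \<and> k = 0 then deriv (w c) t / 2 - w c t else 0)"

lemma Cf_eq:
  assumes "\<forall>i. w i t \<noteq> 0" "w 0 = (\<lambda>_. -1)"
  shows "DT (Wd w) c (\<lambda>_. axis b 1) t = CfT w c b t"
  unfolding vec_eq_iff
proof
  fix k
  have d0: "deriv (w 0) t = 0" using assms(2) by simp
  have sg: "(\<Sum>j\<in>UNIV. Gam w k c j t * axis b 1 $ j) = Gam w k c b t"
    by (simp add: mult.commute[of _ "axis _ _ $ _"] sum_axis)
  show "DT (Wd w) c (\<lambda>_. axis b 1) t $ k = CfT w c b t $ k"
    unfolding DT_comp[OF assms] sg using assms(2) d0
    by (auto simp: CfT_def Gam_def axis_def)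
qed

lemma ricT_red:
  assumes "\<forall>i. w i t \<noteq> 0"
  shows "ricT (Wd w) a b t = (\<Sum>c\<in>UNIV. (DT (Wd w) a (DT (Wd w) c (\<lambda>_. axis b 1)) t - DT (Wd w) c (DT (Wd w) a (\<lambda>_. axis b 1)) t) $ c)"
proof -
  have "\<And>c V. (\<Sum>d\<in>UNIV. (if c = d then inverse (w c t) else 0) * (\<Sum>i\<in>UNIV. V i * w i t * axis d 1 $ i)) = V c"
  proof -
    fix c and V :: "4 \<Rightarrow> real"
    have "(\<Sum>d\<in>UNIV. (if c = d then inverse (w c t) else 0) * (\<Sum>i\<in>UNIV. V i * w i t * axis d 1 $ i))
       = inverse (w c t) * (\<Sum>i\<in>UNIV. V i * w i t * axis c 1 $ i)" by (rule sdelta2)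
    also have "\<dots> = V c" using assms by (simp add: mult.commute[of _ "axis _ _ $ _"] sum_axis)
    finally show "?thesis c V" .
  qed
  then show ?thesis
    unfolding ricT_def inv_Wd[of w t, OF assms] gmT_Wd by (simp add: Wd_def[of "\<lambda>i t. inverse (w i t)"])
qed

lemma dCf:
  assumes "open S" "t \<in> S" "\<forall>s\<in>S. \<forall>i. w i s \<noteq> 0" "w 0 = (\<lambda>_. -1)"
  shows "deriv (\<lambda>s. DT (Wd w) c (\<lambda>_. axis b 1) s $ k) t = deriv (\<lambda>s. CfT w c b s $ k) t"
proof (rule deriv_cong_ev[OF _ refl])
  have "eventually (\<lambda>s. s \<in> S) (nhds t)" using assms by (simp add: eventually_nhds_in_open)
  then show "eventually (\<lambda>s. DT (Wd w) c (\<lambda>_. axis b 1) s $ k = CfT w c b s $ k) (nhds t)"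
    by eventually_elim (use assms Cf_eq in auto)
qed


definition RIC where
  "RIC w D1 D2 a b t = (if a \<noteq> b then 0 else if a = 0 then (\<Sum>i\<in>{1,2,3::4}. D1 i + (Hf w i t - 1) * Hf w i t) else
     Hf w a t * (deriv (w a) t / 2 - w a t) - D2 a / 2 + deriv (w a) t
      - (deriv (w a) t / 2 - w a t) * ((\<Sum>i\<in>{1,2,3::4}. Hf w i t - 1) - (Hf w a t - 1)))"

lemma ring_aux: "(d::real) + (d*ha/2 + (-(2*w) - w*ha - hx*(d/2 - w) - hy*(d/2-w))) = ha*(d/2-w) - (d/2-w)*(hy + (hx - 2))"
  by (simp add: algebra_simps)

lemma four4: "(4::4) = 0" by simp

lemma ric_comp:
  assumes S: "open S" "t \<in> S" "\<forall>s\<in>S. \<forall>i. w i s \<noteq> 0" and w0: "w 0 = (\<lambda>_. -1)"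
    and dH: "\<And>i. i \<noteq> 0 \<Longrightarrow> (Hf w i has_real_derivative D1 i) (at t)"
    and dW: "\<And>i. i \<noteq> 0 \<Longrightarrow> (w i has_real_derivative deriv (w i) t) (at t)"
    and dD: "\<And>i. i \<noteq> 0 \<Longrightarrow> (deriv (w i) has_real_derivative D2 i) (at t)"
  shows "ricT (Wd w) a b t = RIC w D1 D2 a b t"
proof -
  have wt: "\<forall>i. w i t \<noteq> 0" using S by auto
  have e1: "\<And>i. i \<noteq> 0 \<Longrightarrow> deriv (Hf w i) t = D1 i" using dH DERIV_imp_deriv by blast
  have e2: "\<And>i. i \<noteq> 0 \<Longrightarrow> deriv (\<lambda>s. Hf w i s - 1) t = D1 i"
    by (rule DERIV_imp_deriv) (auto intro!: derivative_eq_intros dH)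
  have e3: "\<And>i. i \<noteq> 0 \<Longrightarrow> deriv (\<lambda>s. deriv (w i) s / 2 - w i s) t = D2 i / 2 - deriv (w i) t"
    by (rule DERIV_imp_deriv) (auto intro!: derivative_eq_intros dD dW)
  have d0: "deriv (w 0) t = 0" using w0 by simp
  show ?thesis
    unfolding ricT_red[of w t, OF wt] RIC_def
    using exhaust_4[of a] exhaust_4[of b]
    apply (elim disjE)
    apply (simp_all add: DT_comp[of w t, OF wt w0] Cf_eq[of w t, OF wt w0] dCf[OF S w0] sum_4 four4 CfT_def Gam_def e1 e2 e3 d0 w0)
    apply (simp_all add: axis_def)
    apply (rule ring_aux)+
    done
qed


definition pp :: "real \<Rightarrow> real \<Rightarrow> real \<Rightarrow> 4 \<Rightarrow> real" where
  "pp p1 p2 p3 i = (if i = 1 then p1 else if i = 2 then p2 else p3)"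

definition wp :: "(real \<Rightarrow> real) \<Rightarrow> real \<Rightarrow> real \<Rightarrow> real \<Rightarrow> 4 \<Rightarrow> real \<Rightarrow> real" where
  "wp \<phi> p1 p2 p3 i t = (if i = 0 then -1 else \<phi> t powr (2 * pp p1 p2 p3 i))"

lemma warp_eq: "warp_metric \<phi> p1 p2 p3 = (\<lambda>x. Wd (wp \<phi> p1 p2 p3) (x$0))"
  by (rule ext) (simp add: warp_metric_def Wd_def wp_def pp_def vec_eq_iff)

lemma wp_nz: "\<phi> s > 0 \<Longrightarrow> wp \<phi> p1 p2 p3 i s \<noteq> 0"
  by (simp add: wp_def)

lemma wp_pos: "\<phi> s > 0 \<Longrightarrow> i \<noteq> 0 \<Longrightarrow> wp \<phi> p1 p2 p3 i s > 0"
  by (simp add: wp_def)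

lemma DERIV_wp:
  assumes "\<phi> s > 0" "(\<phi> has_real_derivative deriv \<phi> s) (at s)" "i \<noteq> 0"
  shows "(wp \<phi> p1 p2 p3 i has_real_derivative 2 * pp p1 p2 p3 i * wp \<phi> p1 p2 p3 i s * (deriv \<phi> s / \<phi> s)) (at s)"
proof -
  let ?r = "2 * pp p1 p2 p3 i"
  have e: "wp \<phi> p1 p2 p3 i = (\<lambda>t. \<phi> t powr ?r)" using assms(3) by (simp add: wp_def fun_eq_iff)
  have "((\<lambda>t. \<phi> t powr ?r) has_real_derivative ?r * \<phi> s powr (?r - of_nat 1) * deriv \<phi> s) (at s)"
    by (rule DERIV_fun_powr[OF assms(2,1)])
  moreover have "?r * \<phi> s powr (?r - of_nat 1) * deriv \<phi> s = ?r * wp \<phi> p1 p2 p3 i s * (deriv \<phi> s / \<phi> s)"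
    using assms by (simp add: e powr_diff)
  ultimately show ?thesis by (simp add: e)
qed




lemma cancel_w:
  assumes "(w::real) > 0" shows "- w * B = lam * w \<longleftrightarrow> B = - lam"
proof -
  have "- w * B = lam * w \<longleftrightarrow> (-B) * w = lam * w" by (simp add: mult.commute)
  also have "\<dots> \<longleftrightarrow> -B = lam" using assms by (simp only: mult_cancel_right) auto
  finally show ?thesis by auto
qed

lemma cancel_w': "(w::real) > 0 \<Longrightarrow> (- (w * B) = lam * w \<longleftrightarrow> B = - lam)"
  using cancel_w by simp

lemma cond_iff:
  assumes I: "open I" "t \<in> I" and pos: "\<forall>s\<in>I. \<phi> s > 0"
    and d1: "\<forall>s\<in>I. (\<phi> has_real_derivative deriv \<phi> s) (at s)"
    and dU: "((\<lambda>s. deriv \<phi> s / \<phi> s) has_real_derivative Ud) (at t)"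
  shows "(\<forall>a b. ricT (Wd (wp \<phi> p1 p2 p3)) a b t = lam * Wd (wp \<phi> p1 p2 p3) t $ a $ b) \<longleftrightarrow>
     ((p1+p2+p3) * Ud + (p1^2+p2^2+p3^2) * (deriv \<phi> t / \<phi> t)^2 - (p1+p2+p3) * (deriv \<phi> t / \<phi> t) = -lam \<and>
      (\<forall>j\<in>{p1,p2,p3}. j * (Ud + (p1+p2+p3) * (deriv \<phi> t / \<phi> t)^2 - 2 * (deriv \<phi> t / \<phi> t))
          - (p1+p2+p3) * (deriv \<phi> t / \<phi> t) + 2 = -lam))"
proof -
  define U where "U = (\<lambda>s. deriv \<phi> s / \<phi> s)"
  define w where "w = wp \<phi> p1 p2 p3"
  define \<zeta> where "\<zeta> = p1+p2+p3"
  have dU': "(U has_real_derivative Ud) (at t)" using dU by (simp add: U_def)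
  have w0: "w 0 = (\<lambda>_. -1)" by (simp add: w_def wp_def fun_eq_iff)
  have wnz: "\<forall>s\<in>I. \<forall>i. w i s \<noteq> 0" using pos by (simp add: w_def wp_nz)
  have DWs: "\<And>s i. s \<in> I \<Longrightarrow> i \<noteq> 0 \<Longrightarrow> (w i has_real_derivative 2 * pp p1 p2 p3 i * w i s * U s) (at s)"
    unfolding w_def U_def using pos d1 by (intro DERIV_wp) auto
  have dw: "\<And>s i. s \<in> I \<Longrightarrow> i \<noteq> 0 \<Longrightarrow> deriv (w i) s = 2 * pp p1 p2 p3 i * w i s * U s"
    by (rule DERIV_imp_deriv[OF DWs])
  have H: "\<And>s i. s \<in> I \<Longrightarrow> i \<noteq> 0 \<Longrightarrow> Hf w i s = pp p1 p2 p3 i * U s"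
    using dw wnz by (simp add: Hf_def)
  have DH: "\<And>i. i \<noteq> 0 \<Longrightarrow> (Hf w i has_real_derivative pp p1 p2 p3 i * Ud) (at t)"
  proof -
    fix i :: 4 assume i: "i \<noteq> 0"
    have "((\<lambda>s. pp p1 p2 p3 i * U s) has_real_derivative pp p1 p2 p3 i * Ud) (at t)"
      by (rule DERIV_cmult[OF dU'])
    then show "(Hf w i has_real_derivative pp p1 p2 p3 i * Ud) (at t)"
      by (rule has_field_derivative_transform_within_open[OF _ I]) (simp add: H[OF _ i])
  qed
  have DW: "\<And>i. i \<noteq> 0 \<Longrightarrow> (w i has_real_derivative deriv (w i) t) (at t)"
    by (subst dw[OF I(2)], assumption) (rule DWs[OF I(2)])
  have DD: "\<And>i. i \<noteq> 0 \<Longrightarrow> (deriv (w i) has_real_derivative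
       2 * pp p1 p2 p3 i * (deriv (w i) t * U t + w i t * Ud)) (at t)"
  proof -
    fix i :: 4 assume i: "i \<noteq> 0"
    have "((\<lambda>s. 2 * pp p1 p2 p3 i * w i s * U s) has_real_derivative
       2 * pp p1 p2 p3 i * (deriv (w i) t * U t + w i t * Ud)) (at t)"
      by (rule DERIV_cong[OF DERIV_mult'[OF DERIV_cmult[OF DW[OF i]] dU']]) (simp add: algebra_simps)
    then show "(deriv (w i) has_real_derivative 2 * pp p1 p2 p3 i * (deriv (w i) t * U t + w i t * Ud)) (at t)"
      by (rule has_field_derivative_transform_within_open[OF _ I]) (simp add: dw[OF _ i])
  qed
  note R = ric_comp[of I t w "\<lambda>i. pp p1 p2 p3 i * Ud" "\<lambda>i. 2 * pp p1 p2 p3 i * (deriv (w i) t * U t + w i t * Ud)", OF I wnz w0 DH DW DD]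
  let ?D1 = "\<lambda>i. pp p1 p2 p3 i * Ud"
  let ?D2 = "\<lambda>i. 2 * pp p1 p2 p3 i * (deriv (w i) t * U t + w i t * Ud)"
  have R00: "RIC w ?D1 ?D2 0 0 t = \<zeta> * Ud + (p1^2+p2^2+p3^2) * U t ^2 - \<zeta> * U t"
    using H[OF I(2)] by (simp add: RIC_def pp_def \<zeta>_def algebra_simps power2_eq_square)
  have Rjj: "\<And>j. j \<noteq> 0 \<Longrightarrow> RIC w ?D1 ?D2 j j t =
      - w j t * (pp p1 p2 p3 j * (Ud + \<zeta> * U t^2 - 2 * U t) - \<zeta> * U t + 2)"
    using H[OF I(2)] dw[OF I(2)] by (simp add: RIC_def pp_def \<zeta>_def algebra_simps power2_eq_square)
  have R': "\<And>a b. ricT (Wd w) a b t = RIC w ?D1 ?D2 a b t"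
    by (rule ric_comp[OF I wnz w0 DH DW DD])
  have Roff: "\<And>a b. a \<noteq> b \<Longrightarrow> RIC w ?D1 ?D2 a b t = 0" by (simp add: RIC_def)
  have wp: "\<And>j. j \<noteq> 0 \<Longrightarrow> w j t > 0" using pos I by (simp add: w_def wp_pos)
  have Ut: "deriv \<phi> t / \<phi> t = U t" by (simp add: U_def)
  show ?thesis
    unfolding w_def[symmetric] Ut \<zeta>_def[symmetric]
    apply (simp only: forall_4 four4 R')
    apply (simp add: Roff R00 Rjj Wd_def w0 cancel_w' wp)
    apply (simp add: pp_def)
    apply blast
    done
qed



lemma const_deriv:
  assumes "open I" "t \<in> I" "\<forall>s\<in>I. f s = c"
  shows "(f has_real_derivative 0) (at t)"
  by (rule has_field_derivative_transform_within_open[OF DERIV_const[of c] assms(1,2)]) (use assms(3) in auto)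

lemma all_pt: "(\<forall>x::real^4. x $ 0 \<in> I \<longrightarrow> P (x $ 0)) \<longleftrightarrow> (\<forall>t\<in>I. P t)"
proof
  assume h: "\<forall>x::real^4. x $ 0 \<in> I \<longrightarrow> P (x $ 0)"
  show "\<forall>t\<in>I. P t"
  proof
    fix t assume "t \<in> I"
    then show "P t" using h[rule_format, of "\<chi> i. t"] by simp
  qed
qed auto

theorem theorem4p30:
  fixes I :: "real set" and \<phi> :: "real \<Rightarrow> real" and p1 p2 p3 lam :: real
  assumes "open I" and "is_interval I" and "I \<noteq> {}"
    and "smooth_on_real \<phi> I" and "\<forall>t\<in>I. \<phi> t > 0"
    and "\<not> (p1 = p2 \<and> p2 = p3)"
  defines "\<zeta> \<equiv> p1 + p2 + p3" and "\<eta> \<equiv> p1^2 + p2^2 + p3^2"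
  shows "einstein (warp_metric \<phi> p1 p2 p3)
            (ssm (warp_metric \<phi> p1 p2 p3) (cfield 0)) {x. x $ 0 \<in> I} lam
         \<longleftrightarrow> (lam = 0 \<and> 2 * \<eta> / \<zeta>^2 = 1 \<and>
              (\<exists>c0. \<forall>t\<in>I. \<phi> t = c0 * exp (2 * t / \<zeta>)))"
proof -
  note oI = assms(1) and pos = assms(5)
  define U where "U = (\<lambda>s. deriv \<phi> s / \<phi> s)"
  have s0: "\<forall>t\<in>I. ((deriv ^^ 0) \<phi>) differentiable (at t)"
    using assms(4) unfolding smooth_on_real_def by blast
  have s1: "\<forall>t\<in>I. ((deriv ^^ 1) \<phi>) differentiable (at t)"
    using assms(4) unfolding smooth_on_real_def by blast
  have d1: "\<forall>s\<in>I. (\<phi> has_real_derivative deriv \<phi> s) (at s)"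
    using s0 by (simp add: DERIV_deriv_iff_real_differentiable)
  have d2: "\<forall>s\<in>I. (deriv \<phi> has_real_derivative deriv (deriv \<phi>) s) (at s)"
    using s1 by (simp add: DERIV_deriv_iff_real_differentiable)
  have dU: "\<forall>s\<in>I. (U has_real_derivative deriv U s) (at s)"
  proof
    fix s assume s: "s \<in> I"
    have "(U has_real_derivative (deriv (deriv \<phi>) s * \<phi> s - deriv \<phi> s * deriv \<phi> s) / (\<phi> s * \<phi> s)) (at s)"
      unfolding U_def using d1 d2 pos s by (intro DERIV_divide) auto
    then show "(U has_real_derivative deriv U s) (at s)" using DERIV_imp_deriv by metis
  qed
  define E where "E = (\<lambda>t. \<zeta> * deriv U t + \<eta> * (U t)^2 - \<zeta> * U t = -lam \<and>
      (\<forall>j\<in>{p1,p2,p3}. j * (deriv U t + \<zeta> * (U t)^2 - 2 * U t) - \<zeta> * U t + 2 = -lam))"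
  have Ein: "einstein (warp_metric \<phi> p1 p2 p3) (ssm (warp_metric \<phi> p1 p2 p3) (cfield 0)) {x. x $ 0 \<in> I} lam
      \<longleftrightarrow> (\<forall>t\<in>I. E t)"
  proof -
    have "einstein (warp_metric \<phi> p1 p2 p3) (ssm (warp_metric \<phi> p1 p2 p3) (cfield 0)) {x. x $ 0 \<in> I} lam
       \<longleftrightarrow> (\<forall>t\<in>I. \<forall>a b. ricT (Wd (wp \<phi> p1 p2 p3)) a b t = lam * Wd (wp \<phi> p1 p2 p3) t $ a $ b)"
      unfolding einstein_def warp_eq ric_t using all_pt[of I "\<lambda>t. \<forall>a b. ricT (Wd (wp \<phi> p1 p2 p3)) a b t = lam * Wd (wp \<phi> p1 p2 p3) t $ a $ b"]
      by simp
    also have "\<dots> \<longleftrightarrow> (\<forall>t\<in>I. E t)"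
    proof (intro ball_cong refl)
      fix t assume t: "t \<in> I"
      have dUt: "((\<lambda>s. deriv \<phi> s / \<phi> s) has_real_derivative deriv U t) (at t)"
        using dU t by (simp add: U_def)
      show "(\<forall>a b. ricT (Wd (wp \<phi> p1 p2 p3)) a b t = lam * Wd (wp \<phi> p1 p2 p3) t $ a $ b) \<longleftrightarrow> E t"
        unfolding cond_iff[OF oI t pos d1 dUt] E_def \<zeta>_def \<eta>_def U_def ..
    qed
    finally show ?thesis .
  qed
  have cvx: "convex I" using assms(2) by (rule is_interval_convex)
  show ?thesis
  proof
    assume "einstein (warp_metric \<phi> p1 p2 p3) (ssm (warp_metric \<phi> p1 p2 p3) (cfield 0)) {x. x $ 0 \<in> I} lam"
    then have EI: "\<forall>t\<in>I. E t" using Ein by blast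
    obtain t0 where t0: "t0 \<in> I" using assms(3) by blast
    have Q0: "deriv U t + \<zeta> * (U t)^2 - 2 * U t = 0 \<and> \<zeta> * U t = 2 + lam" if t: "t \<in> I" for t
    proof -
      define q where "q = deriv U t + \<zeta> * (U t)^2 - 2 * U t"
      have e: "E t" using EI t by blast
      have e1: "p1 * q - \<zeta> * U t + 2 = -lam" and e2: "p2 * q - \<zeta> * U t + 2 = -lam"
        and e3: "p3 * q - \<zeta> * U t + 2 = -lam"
        using e unfolding E_def q_def by auto
      have "q = 0"
      proof (cases "p1 = p2")
        case True
        then have "p2 \<noteq> p3" using assms(6) by blast
        moreover have "p2 * q = p3 * q" using e2 e3 by linarith
        ultimately show ?thesis by simp
      next
        case False
        moreover have "p1 * q = p2 * q" using e1 e2 by linarith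
        ultimately show ?thesis by simp
      qed
      then show ?thesis using e1 unfolding q_def by simp
    qed
    have E0: "\<zeta> * deriv U t + \<eta> * (U t)^2 - \<zeta> * U t = -lam" if "t \<in> I" for t
      using EI that unfolding E_def by blast
    show "lam = 0 \<and> 2 * \<eta> / \<zeta>^2 = 1 \<and> (\<exists>c0. \<forall>t\<in>I. \<phi> t = c0 * exp (2 * t / \<zeta>))"
    proof (cases "\<zeta> = 0")
      case True
      have lam: "lam = -2" using Q0[OF t0] True by simp
      have UU: "U t * U t = 2 / \<eta>" and \<eta>0: "\<eta> \<noteq> 0" if "t \<in> I" for t
      proof -
        have "\<eta> * (U t)^2 = 2" using E0[OF that] True lam by simp
        then show "\<eta> \<noteq> 0" by auto
        then show "U t * U t = 2 / \<eta>" using \<open>\<eta> * (U t)^2 = 2\<close> by (simp add: field_simps power2_eq_square)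
      qed
      have d0: "((\<lambda>s. U s * U s) has_real_derivative 0) (at t0)"
        by (rule const_deriv[OF oI t0]) (use UU in auto)
      have "((\<lambda>s. U s * U s) has_real_derivative deriv U t0 * U t0 + deriv U t0 * U t0) (at t0)"
        using DERIV_mult[OF dU[rule_format, OF t0] dU[rule_format, OF t0]] by simp
      then have "deriv U t0 * U t0 + deriv U t0 * U t0 = 0" using d0 DERIV_unique by blast
      moreover have "deriv U t0 = 2 * U t0" using Q0[OF t0] True by simp
      ultimately have "U t0 * U t0 = 0" by simp
      then have "U t0 = 0" by simp
      then have False using UU[OF t0] \<eta>0[OF t0] by simp
      then show ?thesis ..
    next
      case False
      have Uc: "\<forall>s\<in>I. U s = (2 + lam) / \<zeta>" using Q0 False by (simp add: field_simps)
      have dU0: "deriv U t = 0" if "t \<in> I" for t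
      proof -
        have "(U has_real_derivative 0) (at t)" by (rule const_deriv[OF oI that Uc])
        then show ?thesis using dU that DERIV_unique by blast
      qed
      define c where "c = U t0"
      have q1: "\<zeta> * c^2 - 2 * c = 0" using Q0[OF t0] dU0[OF t0] by (simp add: c_def)
      have q2: "\<eta> * c^2 - \<zeta> * c = -lam" using E0[OF t0] dU0[OF t0] by (simp add: c_def)
      have q3: "\<zeta> * c = 2 + lam" using Q0[OF t0] by (simp add: c_def)
      have "c * (\<zeta> * c - 2) = 0" using q1 by (simp add: algebra_simps power2_eq_square)
      moreover have "c \<noteq> 0"
      proof
        assume "c = 0"
        then show False using q2 q3 by simp
      qed
      ultimately have zc: "\<zeta> * c = 2" by simp
      have lam0: "lam = 0" using zc q3 by simp
      have cz: "c = 2 / \<zeta>" using zc False by (simp add: field_simps)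
      have "\<eta> * c^2 = 2" using q2 zc lam0 by simp
      then have "\<eta> * (2 / \<zeta>)^2 = 2" by (simp add: cz)
      then have r: "2 * \<eta> / \<zeta>^2 = 1" using False by (simp add: field_simps power2_eq_square)
      have Us: "\<forall>s\<in>I. deriv \<phi> s = 2 / \<zeta> * \<phi> s"
      proof
        fix s assume s: "s \<in> I"
        have "U s = 2 / \<zeta>" using Uc s q3 cz lam0 by simp
        moreover have "\<phi> s > 0" using pos s by blast
        ultimately show "deriv \<phi> s = 2 / \<zeta> * \<phi> s" by (simp add: U_def divide_eq_eq)
      qed
      define \<psi> where "\<psi> = (\<lambda>s. \<phi> s * exp (- (2 * s / \<zeta>)))"
      have "\<exists>c0. \<forall>x\<in>I. \<psi> x = c0"
      proof (rule has_field_derivative_zero_constant[OF cvx])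
        fix x assume x: "x \<in> I"
        have "(\<psi> has_real_derivative deriv \<phi> x * exp (- (2 * x / \<zeta>)) + \<phi> x * (exp (- (2 * x / \<zeta>)) * (- (2 / \<zeta>)))) (at x)"
          unfolding \<psi>_def using d1 x False
          by (auto intro!: derivative_eq_intros simp: field_simps)
        moreover have "deriv \<phi> x * exp (- (2 * x / \<zeta>)) + \<phi> x * (exp (- (2 * x / \<zeta>)) * (- (2 / \<zeta>))) = 0"
          using Us x by (simp add: field_simps)
        ultimately show "(\<psi> has_real_derivative 0) (at x within I)"
          by (auto intro: has_field_derivative_at_within)
      qed
      then obtain c0 where c0: "\<forall>x\<in>I. \<psi> x = c0" by blast
      have "\<forall>t\<in>I. \<phi> t = c0 * exp (2 * t / \<zeta>)"
      proof
        fix t assume t: "t \<in> I"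
        have "\<phi> t = \<psi> t * exp (2 * t / \<zeta>)" unfolding \<psi>_def by (simp add: exp_minus field_simps)
        then show "\<phi> t = c0 * exp (2 * t / \<zeta>)" using c0 t by simp
      qed
      then show ?thesis using lam0 r by blast
    qed
  next
    assume "lam = 0 \<and> 2 * \<eta> / \<zeta>^2 = 1 \<and> (\<exists>c0. \<forall>t\<in>I. \<phi> t = c0 * exp (2 * t / \<zeta>))"
    then obtain c0 where lam0: "lam = 0" and r: "2 * \<eta> / \<zeta>^2 = 1" and c0: "\<forall>t\<in>I. \<phi> t = c0 * exp (2 * t / \<zeta>)"
      by blast
    have Z: "\<zeta> \<noteq> 0" using r by auto
    have r2: "2 * \<eta> = \<zeta>^2" using r Z by (simp add: field_simps)
    have Ut: "U t = 2 / \<zeta>" if t: "t \<in> I" for t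
    proof -
      have "((\<lambda>s. c0 * exp (2 * s / \<zeta>)) has_real_derivative c0 * (exp (2 * t / \<zeta>) * (2 / \<zeta>))) (at t)"
        using Z by (auto intro!: derivative_eq_intros)
      then have "(\<phi> has_real_derivative c0 * (exp (2 * t / \<zeta>) * (2 / \<zeta>))) (at t)"
        by (rule has_field_derivative_transform_within_open[OF _ oI t]) (use c0 in auto)
      then have "deriv \<phi> t = c0 * (exp (2 * t / \<zeta>) * (2 / \<zeta>))" by (rule DERIV_imp_deriv)
      also have "\<dots> = \<phi> t * (2 / \<zeta>)" using c0 t by simp
      finally have "deriv \<phi> t = \<phi> t * (2 / \<zeta>)" .
      moreover have "\<phi> t > 0" using pos t by blast
      ultimately show ?thesis by (simp add: U_def)
    qed
    have dU0: "deriv U t = 0" if "t \<in> I" for t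
    proof -
      have "(U has_real_derivative 0) (at t)" by (rule const_deriv[OF oI that]) (use Ut in auto)
      then show ?thesis using dU that DERIV_unique by blast
    qed
    have "\<forall>t\<in>I. E t"
    proof
      fix t assume t: "t \<in> I"
      have a1: "\<zeta> * deriv U t + \<eta> * (U t)^2 - \<zeta> * U t = -lam"
        using Z r2 by (simp add: Ut[OF t] dU0[OF t] lam0 field_simps power2_eq_square)
      have a2: "j * (deriv U t + \<zeta> * (U t)^2 - 2 * U t) - \<zeta> * U t + 2 = -lam" for j
        using Z by (simp add: Ut[OF t] dU0[OF t] lam0 field_simps power2_eq_square)
      show "E t" unfolding E_def using a1 a2 by blast
    qed
    then show "einstein (warp_metric \<phi> p1 p2 p3) (ssm (warp_metric \<phi> p1 p2 p3) (cfield 0)) {x. x $ 0 \<in> I} lam"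
      using Ein by blast
  qed
qed

end
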